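(* Let $(\Omega,\mathcal{F})$ be a measurable space, $\mathcal{P}$ a nonempty set of probability measures on it, $\hat{\mathbb{E}}[Z]=\sup_{P\in\mathcal{P}}E_P[Z]$, and let $X,Y,Z$ be random variables with $\hat{\mathbb{E}}[X^2]+\hat{\mathbb{E}}[Y^2]+\hat{\mathbb{E}}[Z^2]<\infty$. Then: (1) $\overline{C}(X,Y)=\overline{C}(Y,X)$ and $\underline{C}(X,Y)=\underline{C}(Y,X)$; (2) for all $a,b\in\mathbb{R}$, $\overline{C}(X+a,Y+b)=\overline{C}(X,Y)$ and $\underline{C}(X+a,Y+b)=\underline{C}(X,Y)$; (3) $\overline{C}(X+Y,Z)\le\overline{C}(X,Z)+\overline{C}(Y,Z)$; (4) $\underline{C}(X+Y,Z)\ge\underline{C}(X,Z)+\underline{C}(Y,Z)$; (5) for all $a,b\in\mathbb{R}$ with $ab\ge0$, $\overline{C}(aX,bY)=ab\,\overline{C}(X,Y)$ and $\underline{C}(aX,bY)=ab\,\underline{C}(X,Y)$; (6) for all $a,b\in\mathbb{R}$ with $ab\le 0$, $\overline{C}(aX,bY)=ab\,\underline{C}(X,Y)$; in particular $\underline{C}(X,Y)=-\overline{C}(-X,Y)=-\overline{C}(X,-Y)$.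
   Context: For a random variable $W$ with $\hat{\mathbb{E}}[W^2]<\infty$: $\overline{\mu}_W=\hat{\mathbb{E}}[W]$, $\underline{\mu}_W=-\hat{\mathbb{E}}[-W]$, $M_W=[\underline{\mu}_W,\overline{\mu}_W]$. Upper covariance: $\overline{C}(X,Y)=\max_{\mu_2\in M_Y}\min_{\mu_1\in M_X}\hat{\mathbb{E}}[(X-\mu_1)(Y-\mu_2)]$; lower covariance: $\underline{C}(X,Y)=\min_{\mu_2\in M_Y}\max_{\mu_1\in M_X}\left(-\hat{\mathbb{E}}[-(X-\mu_1)(Y-\mu_2)]\right)$. *)

theory Defs
  imports "HOL-Probability.Probability"
begin

definition sub_exp :: "'a measure set \<Rightarrow> ('a \<Rightarrow> real) \<Rightarrow> real" where
  "sub_exp Ps W = (SUP P\<in>Ps. integral\<^sup>L P W)"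

definition upper_mean :: "'a measure set \<Rightarrow> ('a \<Rightarrow> real) \<Rightarrow> real" where
  "upper_mean Ps W = sub_exp Ps W"

definition lower_mean :: "'a measure set \<Rightarrow> ('a \<Rightarrow> real) \<Rightarrow> real" where
  "lower_mean Ps W = - sub_exp Ps (\<lambda>\<omega>. - W \<omega>)"

definition mean_interval :: "'a measure set \<Rightarrow> ('a \<Rightarrow> real) \<Rightarrow> real set" where
  "mean_interval Ps W = {lower_mean Ps W .. upper_mean Ps W}"

definition upper_cov :: "'a measure set \<Rightarrow> ('a \<Rightarrow> real) \<Rightarrow> ('a \<Rightarrow> real) \<Rightarrow> real" where
  "upper_cov Ps X Y =
     (SUP m2\<in>mean_interval Ps Y. INF m1\<in>mean_interval Ps X.
        sub_exp Ps (\<lambda>\<omega>. (X \<omega> - m1) * (Y \<omega> - m2)))"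

definition lower_cov :: "'a measure set \<Rightarrow> ('a \<Rightarrow> real) \<Rightarrow> ('a \<Rightarrow> real) \<Rightarrow> real" where
  "lower_cov Ps X Y =
     (INF m2\<in>mean_interval Ps Y. SUP m1\<in>mean_interval Ps X.
        - sub_exp Ps (\<lambda>\<omega>. - ((X \<omega> - m1) * (Y \<omega> - m2))))"

end

theory Submission
  imports Defs
begin

lemma minimax1:
  fixes \<alpha> \<beta> x :: "'l \<Rightarrow> real"
  assumes ab: "a \<le> b" and xr: "\<And>l. l \<in> L \<Longrightarrow> a \<le> x l \<and> x l \<le> b"
    and cov: "\<And>l. l \<in> L \<Longrightarrow> \<alpha> l + \<beta> l * x l \<le> C"
    and conv: "\<And>l1 l2 t. l1 \<in> L \<Longrightarrow> l2 \<in> L \<Longrightarrow> 0 \<le> t \<Longrightarrow> t \<le> 1 \<Longrightarrow>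
       \<exists>l\<in>L. \<alpha> l = t * \<alpha> l1 + (1 - t) * \<alpha> l2 \<and> \<beta> l = t * \<beta> l1 + (1 - t) * \<beta> l2"
  shows "\<exists>s. a \<le> s \<and> s \<le> b \<and> (\<forall>l\<in>L. \<alpha> l + \<beta> l * s \<le> C)"
proof -
  define r where "r l = (C - \<alpha> l) / \<beta> l" for l
  define R where "R = insert a (r ` {l\<in>L. \<beta> l < 0})"
  have req: "\<beta> l * r l = C - \<alpha> l" if "\<beta> l \<noteq> 0" for l
    using that unfolding r_def by simp
  have rneg: "r l \<le> x l" if "l \<in> L" "\<beta> l < 0" for l
  proof -
    have "x l * \<beta> l \<le> C - \<alpha> l" using cov[OF that(1)] by (simp add: algebra_simps)
    then show ?thesis unfolding r_def using that(2) by (simp add: neg_divide_le_eq)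
  qed
  have rpos: "x l \<le> r l" if "l \<in> L" "\<beta> l > 0" for l
  proof -
    have "x l * \<beta> l \<le> C - \<alpha> l" using cov[OF that(1)] by (simp add: algebra_simps)
    then show ?thesis unfolding r_def using that(2) by (simp add: le_divide_eq)
  qed
  have pair: "r l1 \<le> r l2" if l1: "l1 \<in> L" "\<beta> l1 < 0" and l2: "l2 \<in> L" "\<beta> l2 > 0" for l1 l2
  proof (rule ccontr)
    assume "\<not> r l1 \<le> r l2"
    hence lt: "r l2 < r l1" by simp
    define t where "t = \<beta> l2 / (\<beta> l2 - \<beta> l1)"
    have d: "\<beta> l2 - \<beta> l1 > 0" using l1 l2 by simp
    have t0: "0 \<le> t" unfolding t_def using d l2 by simp
    have t1: "t \<le> 1" unfolding t_def using d l1 by (simp add: divide_le_eq)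
    obtain l where l: "l \<in> L" "\<alpha> l = t * \<alpha> l1 + (1 - t) * \<alpha> l2"
        "\<beta> l = t * \<beta> l1 + (1 - t) * \<beta> l2"
      using conv[OF l1(1) l2(1) t0 t1] by blast
    have b0: "t * \<beta> l1 + (1 - t) * \<beta> l2 = 0"
      unfolding t_def using d by (simp add: field_simps)
    have aC: "\<alpha> l \<le> C" using cov[OF l(1)] l(3) b0 by simp
    define s where "s = (r l1 + r l2) / 2"
    have s1: "s < r l1" and s2: "r l2 < s" using lt unfolding s_def by simp_all
    have A: "\<alpha> l1 + \<beta> l1 * s > C"
    proof -
      have "\<beta> l1 * r l1 < \<beta> l1 * s" using s1 l1(2) by (simp add: mult_less_cancel_left)
      then show ?thesis using req[of l1] l1(2) by simp
    qed
    have B: "\<alpha> l2 + \<beta> l2 * s > C"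
    proof -
      have "\<beta> l2 * r l2 < \<beta> l2 * s" using s2 l2(2) by (simp add: mult_less_cancel_left)
      then show ?thesis using req[of l2] l2(2) by simp
    qed
    define m where "m = min (\<alpha> l1 + \<beta> l1 * s) (\<alpha> l2 + \<beta> l2 * s)"
    have mC: "m > C" using A B unfolding m_def by simp
    have "t * m + (1 - t) * m \<le> t * (\<alpha> l1 + \<beta> l1 * s) + (1 - t) * (\<alpha> l2 + \<beta> l2 * s)"
      using t0 t1 unfolding m_def by (intro add_mono mult_left_mono) auto
    also have "\<dots> = \<alpha> l + s * (t * \<beta> l1 + (1 - t) * \<beta> l2)"
      using l(2) by (simp add: algebra_simps)
    also have "\<dots> = \<alpha> l" using b0 by simp
    finally have "m \<le> \<alpha> l" by (simp add: algebra_simps)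
    then show False using mC aC by simp
  qed
  have bdd: "bdd_above R"
    unfolding R_def bdd_above_def using ab rneg xr by (intro exI[of _ b]) (auto intro: order_trans)
  define lo where "lo = Sup R"
  have alo: "a \<le> lo" unfolding lo_def using bdd R_def by (intro cSup_upper) auto
  have lob: "lo \<le> b" unfolding lo_def R_def using ab rneg xr
    by (intro cSup_least) (auto intro: order_trans)
  have "\<alpha> l + \<beta> l * lo \<le> C" if l: "l \<in> L" for l
  proof (cases "\<beta> l = 0")
    case True then show ?thesis using cov[OF l] by simp
  next
    case False
    show ?thesis
    proof (cases "\<beta> l < 0")
      case True
      have "r l \<le> lo" unfolding lo_def using bdd l True R_def by (intro cSup_upper) auto
      hence "\<beta> l * lo \<le> \<beta> l * r l" using True by (simp add: mult_le_cancel_left)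
      then show ?thesis using req[of l] True by simp
    next
      case False2: False
      hence pos: "\<beta> l > 0" using False by simp
      have "lo \<le> r l" unfolding lo_def R_def
        using pair[OF _ _ l pos] xr[OF l] rpos[OF l pos] by (intro cSup_least) (auto intro: order_trans)
      hence "\<beta> l * lo \<le> \<beta> l * r l" using pos by (simp add: mult_le_cancel_left)
      then show ?thesis using req[of l] pos by simp
    qed
  qed
  then show ?thesis using alo lob by blast
qed

definition L2 :: "'a measure set \<Rightarrow> ('a \<Rightarrow> real) \<Rightarrow> bool" where
  "L2 Ps X \<longleftrightarrow> (\<forall>P\<in>Ps. X \<in> borel_measurable P \<and> integrable P (\<lambda>\<omega>. (X \<omega>)\<^sup>2))
     \<and> (\<exists>B. \<forall>P\<in>Ps. integral\<^sup>L P (\<lambda>\<omega>. (X \<omega>)\<^sup>2) \<le> B)"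

definition intall :: "'a measure set \<Rightarrow> ('a \<Rightarrow> real) \<Rightarrow> bool" where
  "intall Ps f \<longleftrightarrow> (\<forall>P\<in>Ps. integrable P f)"

inductive_set mixes :: "'a measure set \<Rightarrow> (('a \<Rightarrow> real) \<Rightarrow> real) set" for Ps where
  base: "P \<in> Ps \<Longrightarrow> (\<lambda>W. integral\<^sup>L P W) \<in> mixes Ps"
| comb: "l1 \<in> mixes Ps \<Longrightarrow> l2 \<in> mixes Ps \<Longrightarrow> 0 \<le> t \<Longrightarrow> t \<le> 1 \<Longrightarrow>
     (\<lambda>W. t * l1 W + (1 - t) * l2 W) \<in> mixes Ps"

definition cv :: "(('a \<Rightarrow> real) \<Rightarrow> real) \<Rightarrow> ('a \<Rightarrow> real) \<Rightarrow> ('a \<Rightarrow> real) \<Rightarrow> real" where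
  "cv l X Y = l (\<lambda>\<omega>. X \<omega> * Y \<omega>) - l X * l Y"

locale sube =
  fixes Ps :: "'a measure set"
  assumes ne: "Ps \<noteq> {}" and ps: "\<And>P. P \<in> Ps \<Longrightarrow> prob_space P"
begin

lemma int_lin:
  fixes f g h :: "'a \<Rightarrow> real"
  assumes P: "P \<in> Ps" and f: "integrable P f" and g: "integrable P g" and h: "integrable P h"
  shows "integral\<^sup>L P (\<lambda>\<omega>. a * f \<omega> + b * g \<omega> + c * h \<omega> + d)
       = a * integral\<^sup>L P f + b * integral\<^sup>L P g + c * integral\<^sup>L P h + d"
proof -
  interpret prob_space P using ps[OF P] .
  have "integral\<^sup>L P (\<lambda>\<omega>. a * f \<omega> + b * g \<omega> + c * h \<omega> + d)
     = integral\<^sup>L P (\<lambda>\<omega>. a * f \<omega> + b * g \<omega> + c * h \<omega>) + integral\<^sup>L P (\<lambda>\<omega>. d)"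
    using f g h by (intro Bochner_Integration.integral_add Bochner_Integration.integrable_add integrable_mult_right) simp_all
  also have "integral\<^sup>L P (\<lambda>\<omega>. a * f \<omega> + b * g \<omega> + c * h \<omega>)
     = integral\<^sup>L P (\<lambda>\<omega>. a * f \<omega> + b * g \<omega>) + integral\<^sup>L P (\<lambda>\<omega>. c * h \<omega>)"
    using f g h by (intro Bochner_Integration.integral_add Bochner_Integration.integrable_add integrable_mult_right) simp_all
  also have "integral\<^sup>L P (\<lambda>\<omega>. a * f \<omega> + b * g \<omega>)
     = integral\<^sup>L P (\<lambda>\<omega>. a * f \<omega>) + integral\<^sup>L P (\<lambda>\<omega>. b * g \<omega>)"
    using f g h by (intro Bochner_Integration.integral_add Bochner_Integration.integrable_add integrable_mult_right) simp_all
  finally show ?thesis by (simp add: prob_space)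
qed

lemma mix_lin:
  assumes l: "l \<in> mixes Ps" and f: "intall Ps f" and g: "intall Ps g" and h: "intall Ps h"
  shows "l (\<lambda>\<omega>. a * f \<omega> + b * g \<omega> + c * h \<omega> + d) = a * l f + b * l g + c * l h + d"
  using l
proof induction
  case (base P)
  then show ?case using int_lin f g h unfolding intall_def by blast
next
  case (comb l1 l2 t)
  then show ?case by (simp add: algebra_simps)
qed

lemma mix_lin1:
  assumes l: "l \<in> mixes Ps" and f: "intall Ps f"
  shows "l (\<lambda>\<omega>. a * f \<omega> + d) = a * l f + d"
  using mix_lin[OF l f f f, of a 0 0 d] by simp

lemma mix_le:
  assumes l: "l \<in> mixes Ps" and B: "\<forall>P\<in>Ps. integral\<^sup>L P f \<le> B"
  shows "l f \<le> B"
  using l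
proof induction
  case (base P)
  then show ?case using B by auto
next
  case (comb l1 l2 t)
  have "t * l1 f + (1 - t) * l2 f \<le> t * B + (1 - t) * B"
    using comb by (intro add_mono mult_left_mono) auto
  then show ?case by (simp add: algebra_simps)
qed

lemma mix_ge:
  assumes l: "l \<in> mixes Ps" and B: "\<forall>P\<in>Ps. B \<le> integral\<^sup>L P f"
  shows "B \<le> l f"
  using l
proof induction
  case (base P)
  then show ?case using B by auto
next
  case (comb l1 l2 t)
  have "t * B + (1 - t) * B \<le> t * l1 f + (1 - t) * l2 f"
    using comb by (intro add_mono mult_left_mono) auto
  then show ?case by (simp add: algebra_simps)
qed

lemma ineq_abs: "\<bar>x::real\<bar> \<le> 1 + x\<^sup>2"
proof -
  have "0 \<le> (\<bar>x\<bar> - 1/2)\<^sup>2" by simp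
  also have "\<dots> = \<bar>x\<bar>\<^sup>2 - \<bar>x\<bar> + 1/4" by (simp add: power2_eq_square algebra_simps)
  finally show ?thesis by simp
qed
lemma ineq_prod: "\<bar>(x::real) * y\<bar> \<le> x\<^sup>2 + y\<^sup>2"
proof -
  have "0 \<le> (\<bar>x\<bar> - \<bar>y\<bar>)\<^sup>2" by simp
  also have "\<dots> = \<bar>x\<bar>\<^sup>2 + \<bar>y\<bar>\<^sup>2 - 2 * (\<bar>x\<bar> * \<bar>y\<bar>)" by (simp add: power2_eq_square algebra_simps)
  finally have "2 * (\<bar>x\<bar> * \<bar>y\<bar>) \<le> x\<^sup>2 + y\<^sup>2" by simp
  moreover have "0 \<le> \<bar>x\<bar> * \<bar>y\<bar>" by simp
  ultimately show ?thesis unfolding abs_mult by linarith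
qed
lemma ineq3: "((u::real) + v + w)\<^sup>2 \<le> 3 * (u\<^sup>2 + v\<^sup>2 + w\<^sup>2)"
proof -
  have "0 \<le> (u-v)\<^sup>2 + (v-w)\<^sup>2 + (u-w)\<^sup>2" by simp
  then show ?thesis by (simp add: power2_eq_square algebra_simps)
qed

lemma L2_meas: "L2 Ps X \<Longrightarrow> P \<in> Ps \<Longrightarrow> X \<in> borel_measurable P"
  unfolding L2_def by blast

lemma L2_sq: "L2 Ps X \<Longrightarrow> P \<in> Ps \<Longrightarrow> integrable P (\<lambda>\<omega>. (X \<omega>)\<^sup>2)"
  unfolding L2_def by blast

lemma L2_bnd: assumes "L2 Ps X" obtains B where "\<And>P. P \<in> Ps \<Longrightarrow> integral\<^sup>L P (\<lambda>\<omega>. (X \<omega>)\<^sup>2) \<le> B"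
  using assms unfolding L2_def by blast

lemma L2_int: assumes X: "L2 Ps X" and P: "P \<in> Ps" shows "integrable P X"
proof -
  interpret prob_space P using ps[OF P] .
  have "integrable P (\<lambda>\<omega>. 1 + (X \<omega>)\<^sup>2)" using L2_sq[OF X P] by simp
  then show ?thesis
    by (rule Bochner_Integration.integrable_bound) (use L2_meas[OF X P] ineq_abs in auto)
qed

lemma L2_prod_int: assumes X: "L2 Ps X" and Y: "L2 Ps Y" and P: "P \<in> Ps"
  shows "integrable P (\<lambda>\<omega>. X \<omega> * Y \<omega>)"
proof -
  interpret prob_space P using ps[OF P] .
  have "integrable P (\<lambda>\<omega>. (X \<omega>)\<^sup>2 + (Y \<omega>)\<^sup>2)" using L2_sq[OF X P] L2_sq[OF Y P] by simp
  then show ?thesis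
    by (rule Bochner_Integration.integrable_bound) (use L2_meas[OF X P] L2_meas[OF Y P] ineq_prod in auto)
qed

lemma L2_intall: "L2 Ps X \<Longrightarrow> intall Ps X"
  unfolding intall_def using L2_int by blast

lemma L2_prod_intall: "L2 Ps X \<Longrightarrow> L2 Ps Y \<Longrightarrow> intall Ps (\<lambda>\<omega>. X \<omega> * Y \<omega>)"
  unfolding intall_def using L2_prod_int by blast

lemma L2_affine: assumes X: "L2 Ps X" and Y: "L2 Ps Y"
  shows "L2 Ps (\<lambda>\<omega>. a * X \<omega> + b * Y \<omega> + c)"
proof -
  obtain BX where BX: "\<And>P. P \<in> Ps \<Longrightarrow> integral\<^sup>L P (\<lambda>\<omega>. (X \<omega>)\<^sup>2) \<le> BX" using L2_bnd[OF X] by blast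
  obtain BY where BY: "\<And>P. P \<in> Ps \<Longrightarrow> integral\<^sup>L P (\<lambda>\<omega>. (Y \<omega>)\<^sup>2) \<le> BY" using L2_bnd[OF Y] by blast
  have main: "(\<lambda>\<omega>. a * X \<omega> + b * Y \<omega> + c) \<in> borel_measurable P \<and>
     integrable P (\<lambda>\<omega>. (a * X \<omega> + b * Y \<omega> + c)\<^sup>2) \<and>
     integral\<^sup>L P (\<lambda>\<omega>. (a * X \<omega> + b * Y \<omega> + c)\<^sup>2) \<le> 3 * (a\<^sup>2 * BX + b\<^sup>2 * BY + c\<^sup>2)"
    if P: "P \<in> Ps" for P
  proof -
    interpret prob_space P using ps[OF P] .
    have mX: "X \<in> borel_measurable P" and mY: "Y \<in> borel_measurable P"
      using L2_meas[OF X P] L2_meas[OF Y P] .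
    have m: "(\<lambda>\<omega>. a * X \<omega> + b * Y \<omega> + c) \<in> borel_measurable P" using mX mY by measurable
    have m2: "(\<lambda>\<omega>. (a * X \<omega> + b * Y \<omega> + c)\<^sup>2) \<in> borel_measurable P" using mX mY by measurable
    let ?F = "\<lambda>\<omega>. 3 * a\<^sup>2 * (X \<omega>)\<^sup>2 + 3 * b\<^sup>2 * (Y \<omega>)\<^sup>2 + 0 * (Y \<omega>)\<^sup>2 + 3 * c\<^sup>2"
    have iF: "integrable P ?F" using L2_sq[OF X P] L2_sq[OF Y P] by simp
    have le: "(a * X \<omega> + b * Y \<omega> + c)\<^sup>2 \<le> ?F \<omega>" for \<omega>
      using ineq3[of "a * X \<omega>" "b * Y \<omega>" c] by (simp add: power_mult_distrib algebra_simps)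
    have i2: "integrable P (\<lambda>\<omega>. (a * X \<omega> + b * Y \<omega> + c)\<^sup>2)"
      by (rule Bochner_Integration.integrable_bound[OF iF m2]) (use le in \<open>auto intro: order_trans\<close>)
    have "integral\<^sup>L P (\<lambda>\<omega>. (a * X \<omega> + b * Y \<omega> + c)\<^sup>2) \<le> integral\<^sup>L P ?F"
      by (rule integral_mono[OF i2 iF]) (use le in auto)
    also have "\<dots> = 3 * a\<^sup>2 * integral\<^sup>L P (\<lambda>\<omega>. (X \<omega>)\<^sup>2) + 3 * b\<^sup>2 * integral\<^sup>L P (\<lambda>\<omega>. (Y \<omega>)\<^sup>2)
        + 0 * integral\<^sup>L P (\<lambda>\<omega>. (Y \<omega>)\<^sup>2) + 3 * c\<^sup>2"
      by (rule int_lin[OF P L2_sq[OF X P] L2_sq[OF Y P] L2_sq[OF Y P]])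
    also have "\<dots> \<le> 3 * (a\<^sup>2 * BX + b\<^sup>2 * BY + c\<^sup>2)"
      using mult_left_mono[OF BX[OF P], of "a\<^sup>2"] mult_left_mono[OF BY[OF P], of "b\<^sup>2"]
      by (simp add: algebra_simps)
    finally show ?thesis using m i2 by blast
  qed
  then show ?thesis unfolding L2_def by blast
qed

lemma mixes_ne: "mixes Ps \<noteq> {}"
  using ne mixes.base by blast


lemma abs_int_le:
  fixes f g :: "'a \<Rightarrow> real"
  assumes "integrable P f" "integrable P g" "\<And>x. \<bar>f x\<bar> \<le> g x"
  shows "\<bar>integral\<^sup>L P f\<bar> \<le> integral\<^sup>L P g"
proof -
  have "integral\<^sup>L P (\<lambda>x. \<bar>f x\<bar>) \<le> integral\<^sup>L P g"
    by (rule integral_mono) (use assms in auto)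
  then show ?thesis using integral_abs_bound[of P f] by linarith
qed

lemma int_lin1:
  fixes f :: "'a \<Rightarrow> real"
  assumes P: "P \<in> Ps" and f: "integrable P f"
  shows "integral\<^sup>L P (\<lambda>\<omega>. a * f \<omega> + d) = a * integral\<^sup>L P f + d"
  using int_lin[OF P f f f, of a 0 0 d] by simp

lemma L2_shift: "L2 Ps X \<Longrightarrow> L2 Ps (\<lambda>\<omega>. X \<omega> - m)"
  using L2_affine[of X X 1 0 "-m"] by simp

lemma L2_neg: "L2 Ps X \<Longrightarrow> L2 Ps (\<lambda>\<omega>. - X \<omega>)"
  using L2_affine[of X X "-1" 0 0] by simp

lemma L2_mean_bdd: assumes X: "L2 Ps X" shows "bdd_above ((\<lambda>P. integral\<^sup>L P X) ` Ps)"
proof -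
  obtain BX where BX: "\<And>P. P \<in> Ps \<Longrightarrow> integral\<^sup>L P (\<lambda>\<omega>. (X \<omega>)\<^sup>2) \<le> BX" using L2_bnd[OF X] by blast
  have "integral\<^sup>L P X \<le> 1 + BX" if P: "P \<in> Ps" for P
  proof -
    interpret prob_space P using ps[OF P] .
    have "\<bar>integral\<^sup>L P X\<bar> \<le> integral\<^sup>L P (\<lambda>\<omega>. 1 * (X \<omega>)\<^sup>2 + 1)"
      by (rule abs_int_le) (use L2_int[OF X P] L2_sq[OF X P] ineq_abs in \<open>auto simp: add.commute\<close>)
    also have "\<dots> = integral\<^sup>L P (\<lambda>\<omega>. (X \<omega>)\<^sup>2) + 1" using int_lin1[OF P L2_sq[OF X P], of 1 1] by simp
    finally show ?thesis using BX[OF P] by linarith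
  qed
  then show ?thesis unfolding bdd_above_def by blast
qed

lemma sub_exp_ge:
  assumes "bdd_above ((\<lambda>P. integral\<^sup>L P W) ` Ps)" and l: "l \<in> mixes Ps"
  shows "l W \<le> sub_exp Ps W"
  by (rule mix_le[OF l]) (use assms(1) in \<open>auto simp: sub_exp_def intro: cSUP_upper\<close>)

lemma sub_exp_le:
  assumes "\<And>P. P \<in> Ps \<Longrightarrow> integral\<^sup>L P W \<le> B"
  shows "sub_exp Ps W \<le> B"
  unfolding sub_exp_def using ne assms by (intro cSUP_least) auto

lemma mean_in: assumes X: "L2 Ps X" and l: "l \<in> mixes Ps"
  shows "l X \<in> mean_interval Ps X"
proof -
  have u: "l X \<le> upper_mean Ps X" unfolding upper_mean_def by (rule sub_exp_ge[OF L2_mean_bdd[OF X] l])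
  have "l (\<lambda>\<omega>. - X \<omega>) \<le> sub_exp Ps (\<lambda>\<omega>. - X \<omega>)" by (rule sub_exp_ge[OF L2_mean_bdd[OF L2_neg[OF X]] l])
  moreover have "l (\<lambda>\<omega>. - X \<omega>) = - l X" using mix_lin1[OF l L2_intall[OF X], of "-1" 0] by simp
  ultimately have "lower_mean Ps X \<le> l X" unfolding lower_mean_def by simp
  then show ?thesis using u unfolding mean_interval_def by simp
qed

lemma sq_bound: assumes "a \<le> (m::real)" "m \<le> b" shows "m\<^sup>2 \<le> (\<bar>a\<bar> + \<bar>b\<bar>)\<^sup>2"
proof -
  have "\<bar>m\<bar> \<le> \<bar>a\<bar> + \<bar>b\<bar>" using assms by linarith
  hence "\<bar>m\<bar>\<^sup>2 \<le> (\<bar>a\<bar> + \<bar>b\<bar>)\<^sup>2" by (intro power_mono) auto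
  then show ?thesis by simp
qed

lemma ineq_rect: "\<bar>((x::real) - m1) * (y - m2)\<bar> \<le> 2 * x\<^sup>2 + 2 * y\<^sup>2 + 2 * m1\<^sup>2 + 2 * m2\<^sup>2"
proof -
  have "\<bar>(x - m1) * (y - m2)\<bar> \<le> (x - m1)\<^sup>2 + (y - m2)\<^sup>2" by (rule ineq_prod)
  moreover have "0 \<le> (x + m1)\<^sup>2 + (y + m2)\<^sup>2" by simp
  ultimately show ?thesis by (simp add: power2_eq_square algebra_simps)
qed

lemma rect_bnd: assumes X: "L2 Ps X" and Y: "L2 Ps Y"
  obtains K where "\<And>P m1 m2. P \<in> Ps \<Longrightarrow>
    \<bar>integral\<^sup>L P (\<lambda>\<omega>. (X \<omega> - m1) * (Y \<omega> - m2))\<bar> \<le> K + 2 * m1\<^sup>2 + 2 * m2\<^sup>2"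
proof -
  obtain BX where BX: "\<And>P. P \<in> Ps \<Longrightarrow> integral\<^sup>L P (\<lambda>\<omega>. (X \<omega>)\<^sup>2) \<le> BX" using L2_bnd[OF X] by blast
  obtain BY where BY: "\<And>P. P \<in> Ps \<Longrightarrow> integral\<^sup>L P (\<lambda>\<omega>. (Y \<omega>)\<^sup>2) \<le> BY" using L2_bnd[OF Y] by blast
  have "\<bar>integral\<^sup>L P (\<lambda>\<omega>. (X \<omega> - m1) * (Y \<omega> - m2))\<bar> \<le> (2 * BX + 2 * BY) + 2 * m1\<^sup>2 + 2 * m2\<^sup>2"
    if P: "P \<in> Ps" for P m1 m2
  proof -
    interpret prob_space P using ps[OF P] .
    have "\<bar>integral\<^sup>L P (\<lambda>\<omega>. (X \<omega> - m1) * (Y \<omega> - m2))\<bar>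
       \<le> integral\<^sup>L P (\<lambda>\<omega>. 2 * (X \<omega>)\<^sup>2 + 2 * (Y \<omega>)\<^sup>2 + 0 * (Y \<omega>)\<^sup>2 + (2 * m1\<^sup>2 + 2 * m2\<^sup>2))"
      by (rule abs_int_le)
        (use L2_prod_int[OF L2_shift[OF X] L2_shift[OF Y] P] L2_sq[OF X P] L2_sq[OF Y P] ineq_rect in \<open>auto simp: add.assoc\<close>)
    also have "\<dots> = 2 * integral\<^sup>L P (\<lambda>\<omega>. (X \<omega>)\<^sup>2) + 2 * integral\<^sup>L P (\<lambda>\<omega>. (Y \<omega>)\<^sup>2)
        + 0 * integral\<^sup>L P (\<lambda>\<omega>. (Y \<omega>)\<^sup>2) + (2 * m1\<^sup>2 + 2 * m2\<^sup>2)"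
      by (rule int_lin[OF P L2_sq[OF X P] L2_sq[OF Y P] L2_sq[OF Y P]])
    finally show ?thesis using BX[OF P] BY[OF P] by linarith
  qed
  then show ?thesis using that by blast
qed


lemma lower_syn: "lower_cov Ps X Y = - upper_cov Ps (\<lambda>\<omega>. - X \<omega>) Y"
proof -
  have I: "mean_interval Ps (\<lambda>\<omega>. - X \<omega>) = uminus ` mean_interval Ps X"
    unfolding mean_interval_def lower_mean_def upper_mean_def image_uminus_atLeastAtMost by simp
  have e: "(\<lambda>\<omega>. (- X \<omega> - - m1) * (Y \<omega> - m2)) = (\<lambda>\<omega>. - ((X \<omega> - m1) * (Y \<omega> - m2)))" for m1 m2
    by (rule ext) (simp add: algebra_simps)
  have INFSUP: "\<And>(f::real\<Rightarrow>real) A. (INF x\<in>A. f x) = - (SUP x\<in>A. - f x)"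
    by (simp add: Inf_real_def image_image)
  show ?thesis
    unfolding lower_cov_def upper_cov_def I image_image e INFSUP[of _ "mean_interval Ps Y"]
    by (simp add: INFSUP)
qed

lemma mix_rect:
  assumes X: "L2 Ps X" and Y: "L2 Ps Y" and l: "l \<in> mixes Ps"
  shows "l (\<lambda>\<omega>. (X \<omega> - m1) * (Y \<omega> - m2)) = l (\<lambda>\<omega>. X \<omega> * Y \<omega>) - m1 * l Y - m2 * l X + m1 * m2"
proof -
  have "(\<lambda>\<omega>. (X \<omega> - m1) * (Y \<omega> - m2)) = (\<lambda>\<omega>. 1 * (X \<omega> * Y \<omega>) + (-m1) * Y \<omega> + (-m2) * X \<omega> + m1 * m2)"
    by (rule ext) (simp add: algebra_simps)
  then show ?thesis
    using mix_lin[OF l L2_prod_intall[OF X Y] L2_intall[OF Y] L2_intall[OF X], of 1 "-m1" "-m2" "m1 * m2"]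
    by simp
qed

lemma cov_eq:
  assumes X: "L2 Ps X" and Y: "L2 Ps Y"
  shows "upper_cov Ps X Y = (SUP l\<in>mixes Ps. cv l X Y)"
proof -
  obtain K where K: "\<And>P m1 m2. P \<in> Ps \<Longrightarrow>
    \<bar>integral\<^sup>L P (\<lambda>\<omega>. (X \<omega> - m1) * (Y \<omega> - m2))\<bar> \<le> K + 2 * m1\<^sup>2 + 2 * m2\<^sup>2"
    using rect_bnd[OF X Y] by blast
  define g where "g m1 m2 = sub_exp Ps (\<lambda>\<omega>. (X \<omega> - m1) * (Y \<omega> - m2))" for m1 m2
  define I1 where "I1 = mean_interval Ps X"
  define I2 where "I2 = mean_interval Ps Y"
  define a1 where "a1 = lower_mean Ps X"
  define b1 where "b1 = upper_mean Ps X"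
  define a2 where "a2 = lower_mean Ps Y"
  define b2 where "b2 = upper_mean Ps Y"
  have I1: "I1 = {a1..b1}" and I2: "I2 = {a2..b2}"
    unfolding I1_def I2_def a1_def b1_def a2_def b2_def mean_interval_def by auto
  obtain P0 where P0: "P0 \<in> Ps" using ne by blast
  have l0: "(\<lambda>W. integral\<^sup>L P0 W) \<in> mixes Ps" using P0 by (rule mixes.base)
  have inI1: "l X \<in> I1" if "l \<in> mixes Ps" for l using mean_in[OF X that] unfolding I1_def .
  have inI2: "l Y \<in> I2" if "l \<in> mixes Ps" for l using mean_in[OF Y that] unfolding I2_def .
  have I1ne: "I1 \<noteq> {}" and I2ne: "I2 \<noteq> {}" using inI1[OF l0] inI2[OF l0] by auto
  have ab1: "a1 \<le> b1" using I1ne I1 by auto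
  define R1 where "R1 = (\<bar>a1\<bar> + \<bar>b1\<bar>)\<^sup>2"
  define R2 where "R2 = (\<bar>a2\<bar> + \<bar>b2\<bar>)\<^sup>2"
  have R1: "m\<^sup>2 \<le> R1" if "m \<in> I1" for m using that sq_bound unfolding I1 R1_def by auto
  have R2: "m\<^sup>2 \<le> R2" if "m \<in> I2" for m using that sq_bound unfolding I2 R2_def by auto
  have bddP: "bdd_above ((\<lambda>P. integral\<^sup>L P (\<lambda>\<omega>. (X \<omega> - m1) * (Y \<omega> - m2))) ` Ps)" for m1 m2
    unfolding bdd_above_def using K by (intro exI[of _ "K + 2 * m1\<^sup>2 + 2 * m2\<^sup>2"]) (auto simp: abs_le_iff)
  have glb: "- (K + 2 * m1\<^sup>2 + 2 * m2\<^sup>2) \<le> g m1 m2" for m1 m2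
  proof -
    have "- (K + 2 * m1\<^sup>2 + 2 * m2\<^sup>2) \<le> integral\<^sup>L P0 (\<lambda>\<omega>. (X \<omega> - m1) * (Y \<omega> - m2))"
      using K[OF P0, of m1 m2] by (simp add: abs_le_iff)
    also have "\<dots> \<le> g m1 m2" unfolding g_def sub_exp_def using bddP P0 by (intro cSUP_upper) auto
    finally show ?thesis .
  qed
  have gub: "g m1 m2 \<le> K + 2 * m1\<^sup>2 + 2 * m2\<^sup>2" for m1 m2
    unfolding g_def using K by (intro sub_exp_le) (auto simp: abs_le_iff)
  have B1: "bdd_below ((\<lambda>m1. g m1 m2) ` I1)" for m2
  proof -
    have "- (K + 2 * R1 + 2 * m2\<^sup>2) \<le> g m1 m2" if "m1 \<in> I1" for m1
      using glb[of m1 m2] R1[OF that] by linarith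
    then show ?thesis unfolding bdd_below_def by blast
  qed
  have B2: "bdd_above ((\<lambda>m2. INF m1\<in>I1. g m1 m2) ` I2)"
  proof -
    have "(INF m1\<in>I1. g m1 m2) \<le> K + 2 * R1 + 2 * R2" if "m2 \<in> I2" for m2
    proof -
      have "(INF m1\<in>I1. g m1 m2) \<le> g a1 m2" using B1 ab1 I1 by (intro cINF_lower) auto
      also have "\<dots> \<le> K + 2 * R1 + 2 * R2" using gub[of a1 m2] R1[of a1] R2[OF that] ab1 I1 by auto
      finally show ?thesis .
    qed
    then show ?thesis unfolding bdd_above_def by blast
  qed
  have cvr: "cv l X Y = l (\<lambda>\<omega>. (X \<omega> - l X) * (Y \<omega> - m2)) + 0 * m2" if l: "l \<in> mixes Ps" and "m2 = l Y" for l m2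
    using mix_rect[OF X Y l, of "l X" m2] that unfolding cv_def by (simp add: algebra_simps)
  have B3: "bdd_above ((\<lambda>l. cv l X Y) ` mixes Ps)"
  proof -
    have "cv l X Y \<le> K + 2 * R1 + 2 * R2" if l: "l \<in> mixes Ps" for l
    proof -
      have "l (\<lambda>\<omega>. (X \<omega> - l X) * (Y \<omega> - l Y)) \<le> K + 2 * (l X)\<^sup>2 + 2 * (l Y)\<^sup>2"
        using K by (intro mix_le[OF l]) (auto simp: abs_le_iff)
      then show ?thesis using cvr[OF l refl] R1[OF inI1[OF l]] R2[OF inI2[OF l]] by simp
    qed
    then show ?thesis unfolding bdd_above_def by blast
  qed
  have U: "upper_cov Ps X Y = (SUP m2\<in>I2. INF m1\<in>I1. g m1 m2)"
    unfolding upper_cov_def g_def I1_def I2_def ..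
  show ?thesis
  proof (rule antisym)
    show "upper_cov Ps X Y \<le> (SUP l\<in>mixes Ps. cv l X Y)"
      unfolding U
    proof (rule cSUP_least[OF I2ne])
      fix m2 assume m2: "m2 \<in> I2"
      define C where "C = (SUP l\<in>mixes Ps. cv l X Y)"
      have "\<exists>s. a1 \<le> s \<and> s \<le> b1 \<and> (\<forall>l\<in>mixes Ps. (l (\<lambda>\<omega>. X \<omega> * Y \<omega>) - m2 * l X) + (m2 - l Y) * s \<le> C)"
      proof (rule minimax1[where x = "\<lambda>l. l X"])
        show "a1 \<le> b1" by (rule ab1)
        show "a1 \<le> l X \<and> l X \<le> b1" if "l \<in> mixes Ps" for l using inI1[OF that] I1 by auto
        show "(l (\<lambda>\<omega>. X \<omega> * Y \<omega>) - m2 * l X) + (m2 - l Y) * l X \<le> C" if l: "l \<in> mixes Ps" for l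
        proof -
          have "cv l X Y \<le> C" unfolding C_def using B3 l by (intro cSUP_upper) auto
          then show ?thesis unfolding cv_def by (simp add: algebra_simps)
        qed
        show "\<exists>l\<in>mixes Ps. l (\<lambda>\<omega>. X \<omega> * Y \<omega>) - m2 * l X
              = t * (l1 (\<lambda>\<omega>. X \<omega> * Y \<omega>) - m2 * l1 X) + (1 - t) * (l2 (\<lambda>\<omega>. X \<omega> * Y \<omega>) - m2 * l2 X) \<and>
            m2 - l Y = t * (m2 - l1 Y) + (1 - t) * (m2 - l2 Y)"
          if "l1 \<in> mixes Ps" "l2 \<in> mixes Ps" "0 \<le> t" "t \<le> 1" for l1 l2 t
          by (rule bexI[OF _ mixes.comb[OF that]]) (simp add: algebra_simps)
      qed
      then obtain s where s: "a1 \<le> s" "s \<le> b1"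
        "\<And>l. l \<in> mixes Ps \<Longrightarrow> (l (\<lambda>\<omega>. X \<omega> * Y \<omega>) - m2 * l X) + (m2 - l Y) * s \<le> C" by blast
      have "(INF m1\<in>I1. g m1 m2) \<le> g s m2" using B1 s I1 by (intro cINF_lower) auto
      also have "g s m2 \<le> C" unfolding g_def
      proof (rule sub_exp_le)
        fix P assume P: "P \<in> Ps"
        have lP: "(\<lambda>W. integral\<^sup>L P W) \<in> mixes Ps" using P by (rule mixes.base)
        show "integral\<^sup>L P (\<lambda>\<omega>. (X \<omega> - s) * (Y \<omega> - m2)) \<le> C"
          using mix_rect[OF X Y lP, of s m2] s(3)[OF lP] by (simp add: algebra_simps)
      qed
      finally show "(INF m1\<in>I1. g m1 m2) \<le> (SUP l\<in>mixes Ps. cv l X Y)" unfolding C_def .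
    qed
  next
    show "(SUP l\<in>mixes Ps. cv l X Y) \<le> upper_cov Ps X Y"
    proof (rule cSUP_least[OF mixes_ne])
      fix l assume l: "l \<in> mixes Ps"
      have "cv l X Y \<le> (INF m1\<in>I1. g m1 (l Y))"
      proof (rule cINF_greatest[OF I1ne])
        fix m1 assume "m1 \<in> I1"
        have "cv l X Y = l (\<lambda>\<omega>. (X \<omega> - m1) * (Y \<omega> - l Y))"
          using mix_rect[OF X Y l, of m1 "l Y"] unfolding cv_def by (simp add: algebra_simps)
        also have "\<dots> \<le> g m1 (l Y)" unfolding g_def by (rule sub_exp_ge[OF bddP l])
        finally show "cv l X Y \<le> g m1 (l Y)" .
      qed
      also have "\<dots> \<le> (SUP m2\<in>I2. INF m1\<in>I1. g m1 m2)"
        using B2 inI2[OF l] by (intro cSUP_upper) auto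
      finally show "cv l X Y \<le> upper_cov Ps X Y" unfolding U .
    qed
  qed
qed


lemma cv_aff:
  assumes X: "L2 Ps X" and Y: "L2 Ps Y" and l: "l \<in> mixes Ps"
  shows "cv l (\<lambda>\<omega>. a * X \<omega> + c) (\<lambda>\<omega>. b * Y \<omega> + d) = a * b * cv l X Y"
proof -
  have "(\<lambda>\<omega>. (a * X \<omega> + c) * (b * Y \<omega> + d)) = (\<lambda>\<omega>. (a * b) * (X \<omega> * Y \<omega>) + (a * d) * X \<omega> + (c * b) * Y \<omega> + c * d)"
    by (rule ext) (simp add: algebra_simps)
  then have e: "l (\<lambda>\<omega>. (a * X \<omega> + c) * (b * Y \<omega> + d)) = (a * b) * l (\<lambda>\<omega>. X \<omega> * Y \<omega>) + (a * d) * l X + (c * b) * l Y + c * d"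
    using mix_lin[OF l L2_prod_intall[OF X Y] L2_intall[OF X] L2_intall[OF Y]] by simp
  show ?thesis unfolding cv_def e mix_lin1[OF l L2_intall[OF X]] mix_lin1[OF l L2_intall[OF Y]]
    by (simp add: algebra_simps)
qed

lemma cv_add:
  assumes X: "L2 Ps X" and Y: "L2 Ps Y" and Z: "L2 Ps Z" and l: "l \<in> mixes Ps"
  shows "cv l (\<lambda>\<omega>. X \<omega> + Y \<omega>) Z = cv l X Z + cv l Y Z"
proof -
  have "(\<lambda>\<omega>. (X \<omega> + Y \<omega>) * Z \<omega>) = (\<lambda>\<omega>. 1 * (X \<omega> * Z \<omega>) + 1 * (Y \<omega> * Z \<omega>) + 0 * Z \<omega> + 0)"
    by (rule ext) (simp add: algebra_simps)
  then have e1: "l (\<lambda>\<omega>. (X \<omega> + Y \<omega>) * Z \<omega>) = l (\<lambda>\<omega>. X \<omega> * Z \<omega>) + l (\<lambda>\<omega>. Y \<omega> * Z \<omega>)"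
    using mix_lin[OF l L2_prod_intall[OF X Z] L2_prod_intall[OF Y Z] L2_intall[OF Z], of 1 1 0 0] by simp
  have "(\<lambda>\<omega>. X \<omega> + Y \<omega>) = (\<lambda>\<omega>. 1 * X \<omega> + 1 * Y \<omega> + 0 * Y \<omega> + 0)" by simp
  then have e2: "l (\<lambda>\<omega>. X \<omega> + Y \<omega>) = l X + l Y"
    using mix_lin[OF l L2_intall[OF X] L2_intall[OF Y] L2_intall[OF Y], of 1 1 0 0] by simp
  show ?thesis unfolding cv_def e1 e2 by (simp add: algebra_simps)
qed

lemma cv_sym: "cv l X Y = cv l Y X"
  unfolding cv_def by (simp add: mult.commute)

lemma cv_bdd_above:
  assumes X: "L2 Ps X" and Y: "L2 Ps Y"
  shows "bdd_above ((\<lambda>l. cv l X Y) ` mixes Ps)"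
proof -
  obtain K where K: "\<And>P m1 m2. P \<in> Ps \<Longrightarrow>
    \<bar>integral\<^sup>L P (\<lambda>\<omega>. (X \<omega> - m1) * (Y \<omega> - m2))\<bar> \<le> K + 2 * m1\<^sup>2 + 2 * m2\<^sup>2"
    using rect_bnd[OF X Y] by blast
  define R1 where "R1 = (\<bar>lower_mean Ps X\<bar> + \<bar>upper_mean Ps X\<bar>)\<^sup>2"
  define R2 where "R2 = (\<bar>lower_mean Ps Y\<bar> + \<bar>upper_mean Ps Y\<bar>)\<^sup>2"
  have "cv l X Y \<le> K + 2 * R1 + 2 * R2" if l: "l \<in> mixes Ps" for l
  proof -
    have r1: "(l X)\<^sup>2 \<le> R1" using mean_in[OF X l] sq_bound unfolding mean_interval_def R1_def by auto
    have r2: "(l Y)\<^sup>2 \<le> R2" using mean_in[OF Y l] sq_bound unfolding mean_interval_def R2_def by auto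
    have "l (\<lambda>\<omega>. (X \<omega> - l X) * (Y \<omega> - l Y)) \<le> K + 2 * (l X)\<^sup>2 + 2 * (l Y)\<^sup>2"
      using K by (intro mix_le[OF l]) (auto simp: abs_le_iff)
    moreover have "cv l X Y = l (\<lambda>\<omega>. (X \<omega> - l X) * (Y \<omega> - l Y))"
      using mix_rect[OF X Y l, of "l X" "l Y"] unfolding cv_def by (simp add: algebra_simps)
    ultimately show ?thesis using r1 r2 by simp
  qed
  then show ?thesis unfolding bdd_above_def by blast
qed

lemma cv_bdd_below:
  assumes X: "L2 Ps X" and Y: "L2 Ps Y"
  shows "bdd_below ((\<lambda>l. cv l X Y) ` mixes Ps)"
proof -
  obtain B where B: "\<And>l. l \<in> mixes Ps \<Longrightarrow> cv l (\<lambda>\<omega>. - X \<omega>) Y \<le> B"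
    using cv_bdd_above[OF L2_neg[OF X] Y] unfolding bdd_above_def by blast
  have "- B \<le> cv l X Y" if l: "l \<in> mixes Ps" for l
    using B[OF l] cv_aff[OF X Y l, of "-1" 0 1 0] by simp
  then show ?thesis unfolding bdd_below_def by blast
qed

lemma lower_eq:
  assumes X: "L2 Ps X" and Y: "L2 Ps Y"
  shows "lower_cov Ps X Y = (INF l\<in>mixes Ps. cv l X Y)"
proof -
  have "lower_cov Ps X Y = - upper_cov Ps (\<lambda>\<omega>. - X \<omega>) Y" by (rule lower_syn)
  also have "\<dots> = - (SUP l\<in>mixes Ps. cv l (\<lambda>\<omega>. - X \<omega>) Y)" using cov_eq[OF L2_neg[OF X] Y] by simp
  also have "\<dots> = - (SUP l\<in>mixes Ps. - cv l X Y)"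
    using cv_aff[OF X Y, of _ "-1" 0 1 0] by (intro arg_cong[where f=uminus] SUP_cong) auto
  also have "\<dots> = (INF l\<in>mixes Ps. cv l X Y)" by (simp add: Inf_real_def image_image)
  finally show ?thesis .
qed

end

lemma SUP_cmult:
  fixes f :: "'b \<Rightarrow> real"
  assumes c: "0 \<le> c" and A: "A \<noteq> {}" and bdd: "bdd_above (f ` A)"
  shows "(SUP x\<in>A. c * f x) = c * (SUP x\<in>A. f x)"
proof (cases "c = 0")
  case True then show ?thesis using A by simp
next
  case False
  hence cp: "c > 0" using c by simp
  have bdd2: "bdd_above ((\<lambda>x. c * f x) ` A)"
  proof -
    obtain B where "\<And>x. x \<in> A \<Longrightarrow> f x \<le> B" using bdd unfolding bdd_above_def by blast
    then have "\<And>x. x \<in> A \<Longrightarrow> c * f x \<le> c * B" using c by (simp add: mult_left_mono)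
    then show ?thesis unfolding bdd_above_def by blast
  qed
  show ?thesis
  proof (rule antisym)
    show "(SUP x\<in>A. c * f x) \<le> c * (SUP x\<in>A. f x)"
      using A bdd c by (intro cSUP_least) (auto intro: mult_left_mono cSUP_upper)
    have "(SUP x\<in>A. f x) \<le> (SUP x\<in>A. c * f x) / c"
    proof (rule cSUP_least[OF A])
      fix x assume "x \<in> A"
      then have "c * f x \<le> (SUP x\<in>A. c * f x)" using bdd2 by (intro cSUP_upper) auto
      then show "f x \<le> (SUP x\<in>A. c * f x) / c" using cp by (simp add: le_divide_eq mult.commute)
    qed
    then show "c * (SUP x\<in>A. f x) \<le> (SUP x\<in>A. c * f x)" using cp by (simp add: le_divide_eq mult.commute)
  qed
qed

lemma INF_as_SUP: "(INF x\<in>A. f x) = - (SUP x\<in>A. - f x :: real)"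
  by (simp add: Inf_real_def image_image)

lemma bdd_below_neg: "bdd_below (f ` A) \<Longrightarrow> bdd_above ((\<lambda>x. - f x :: real) ` A)"
  unfolding bdd_below_def bdd_above_def by (auto intro: exI[of _ "- _"]) (metis neg_le_iff_le)

lemma INF_cmult:
  fixes f :: "'b \<Rightarrow> real"
  assumes c: "0 \<le> c" and A: "A \<noteq> {}" and bdd: "bdd_below (f ` A)"
  shows "(INF x\<in>A. c * f x) = c * (INF x\<in>A. f x)"
proof -
  have "(INF x\<in>A. c * f x) = - (SUP x\<in>A. c * (- f x))" unfolding INF_as_SUP by simp
  also have "\<dots> = - (c * (SUP x\<in>A. - f x))" using SUP_cmult[OF c A bdd_below_neg[OF bdd]] by simp
  finally show ?thesis unfolding INF_as_SUP[of f] by simp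
qed

lemma L2_from:
  assumes ps: "\<forall>P\<in>Ps. prob_space P \<and> sets P = sets M" and X: "X \<in> borel_measurable M"
    and fin: "(SUP P\<in>Ps. \<integral>\<^sup>+\<omega>. ennreal ((X \<omega>)\<^sup>2) \<partial>P) < \<infinity>"
  shows "L2 Ps X"
proof -
  define S where "S = (SUP P\<in>Ps. \<integral>\<^sup>+\<omega>. ennreal ((X \<omega>)\<^sup>2) \<partial>P)"
  have "X \<in> borel_measurable P \<and> integrable P (\<lambda>\<omega>. (X \<omega>)\<^sup>2) \<and> integral\<^sup>L P (\<lambda>\<omega>. (X \<omega>)\<^sup>2) \<le> enn2real S"
    if P: "P \<in> Ps" for P
  proof -
    have mX: "X \<in> borel_measurable P" using X ps P measurable_cong_sets by blast
    have m2: "(\<lambda>\<omega>. (X \<omega>)\<^sup>2) \<in> borel_measurable P" using mX by measurable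
    have le: "(\<integral>\<^sup>+\<omega>. ennreal ((X \<omega>)\<^sup>2) \<partial>P) \<le> S" unfolding S_def using P by (rule SUP_upper)
    have Sfin: "S < \<infinity>" using fin unfolding S_def .
    have int: "integrable P (\<lambda>\<omega>. (X \<omega>)\<^sup>2)"
      by (rule integrableI_bounded[OF m2]) (use le Sfin in auto)
    have "integral\<^sup>L P (\<lambda>\<omega>. (X \<omega>)\<^sup>2) = enn2real (\<integral>\<^sup>+\<omega>. ennreal ((X \<omega>)\<^sup>2) \<partial>P)"
      by (rule integral_eq_nn_integral[OF m2]) auto
    also have "\<dots> \<le> enn2real S" using le Sfin by (intro enn2real_mono) auto
    finally show ?thesis using mX int by blast
  qed
  then show ?thesis unfolding L2_def by blast
qed


theorem proposition3p7:
  fixes M :: "'a measure" and Ps :: "'a measure set" and X Y Z :: "'a \<Rightarrow> real"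
  assumes "Ps \<noteq> {}"
    and "\<forall>P\<in>Ps. prob_space P \<and> sets P = sets M"
    and "X \<in> borel_measurable M" and "Y \<in> borel_measurable M" and "Z \<in> borel_measurable M"
    and "(SUP P\<in>Ps. \<integral>\<^sup>+\<omega>. ennreal ((X \<omega>)\<^sup>2) \<partial>P)
         + (SUP P\<in>Ps. \<integral>\<^sup>+\<omega>. ennreal ((Y \<omega>)\<^sup>2) \<partial>P)
         + (SUP P\<in>Ps. \<integral>\<^sup>+\<omega>. ennreal ((Z \<omega>)\<^sup>2) \<partial>P) < \<infinity>"
  shows "(upper_cov Ps X Y = upper_cov Ps Y X \<and> lower_cov Ps X Y = lower_cov Ps Y X)
    \<and> (\<forall>a b::real. upper_cov Ps (\<lambda>\<omega>. X \<omega> + a) (\<lambda>\<omega>. Y \<omega> + b) = upper_cov Ps X Y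
                \<and> lower_cov Ps (\<lambda>\<omega>. X \<omega> + a) (\<lambda>\<omega>. Y \<omega> + b) = lower_cov Ps X Y)
    \<and> upper_cov Ps (\<lambda>\<omega>. X \<omega> + Y \<omega>) Z \<le> upper_cov Ps X Z + upper_cov Ps Y Z
    \<and> lower_cov Ps (\<lambda>\<omega>. X \<omega> + Y \<omega>) Z \<ge> lower_cov Ps X Z + lower_cov Ps Y Z
    \<and> (\<forall>a b::real. a * b \<ge> 0 \<longrightarrow>
          upper_cov Ps (\<lambda>\<omega>. a * X \<omega>) (\<lambda>\<omega>. b * Y \<omega>) = a * b * upper_cov Ps X Y
        \<and> lower_cov Ps (\<lambda>\<omega>. a * X \<omega>) (\<lambda>\<omega>. b * Y \<omega>) = a * b * lower_cov Ps X Y)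
    \<and> (\<forall>a b::real. a * b \<le> 0 \<longrightarrow>
          upper_cov Ps (\<lambda>\<omega>. a * X \<omega>) (\<lambda>\<omega>. b * Y \<omega>) = a * b * lower_cov Ps X Y)
    \<and> lower_cov Ps X Y = - upper_cov Ps (\<lambda>\<omega>. - X \<omega>) Y
    \<and> lower_cov Ps X Y = - upper_cov Ps X (\<lambda>\<omega>. - Y \<omega>)"
proof -
  note ps = assms(2)
  have fins: "(SUP P\<in>Ps. \<integral>\<^sup>+\<omega>. ennreal ((X \<omega>)\<^sup>2) \<partial>P) < \<infinity>"
    "(SUP P\<in>Ps. \<integral>\<^sup>+\<omega>. ennreal ((Y \<omega>)\<^sup>2) \<partial>P) < \<infinity>"
    "(SUP P\<in>Ps. \<integral>\<^sup>+\<omega>. ennreal ((Z \<omega>)\<^sup>2) \<partial>P) < \<infinity>"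
    using assms(6) by (simp_all add: ennreal_add_less_top)
  have X: "L2 Ps X" by (rule L2_from[OF ps assms(3) fins(1)])
  have Y: "L2 Ps Y" by (rule L2_from[OF ps assms(4) fins(2)])
  have Z: "L2 Ps Z" by (rule L2_from[OF ps assms(5) fins(3)])
  interpret sube Ps unfolding sube_def using assms(1,2) by blast
  have Lsh: "L2 Ps (\<lambda>\<omega>. W \<omega> + c)" if "L2 Ps W" for W c
    using L2_affine[OF that that, of 1 0 c] by simp
  have Lsc: "L2 Ps (\<lambda>\<omega>. c * W \<omega>)" if "L2 Ps W" for W c
    using L2_affine[OF that that, of c 0 0] by simp
  have Lad: "L2 Ps (\<lambda>\<omega>. V \<omega> + W \<omega>)" if "L2 Ps V" "L2 Ps W" for V W
    using L2_affine[OF that, of 1 1 0] by simp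
  have sym: "upper_cov Ps X Y = upper_cov Ps Y X"
    unfolding cov_eq[OF X Y] cov_eq[OF Y X] using cv_sym by metis
  have syml: "lower_cov Ps X Y = lower_cov Ps Y X"
    unfolding lower_eq[OF X Y] lower_eq[OF Y X] using cv_sym by metis
  have shift: "upper_cov Ps (\<lambda>\<omega>. X \<omega> + a) (\<lambda>\<omega>. Y \<omega> + b) = upper_cov Ps X Y
           \<and> lower_cov Ps (\<lambda>\<omega>. X \<omega> + a) (\<lambda>\<omega>. Y \<omega> + b) = lower_cov Ps X Y" for a b
  proof -
    have e: "cv l (\<lambda>\<omega>. X \<omega> + a) (\<lambda>\<omega>. Y \<omega> + b) = cv l X Y" if "l \<in> mixes Ps" for l
      using cv_aff[OF X Y that, of 1 a 1 b] by simp
    show ?thesis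
      unfolding cov_eq[OF Lsh[OF X] Lsh[OF Y]] cov_eq[OF X Y] lower_eq[OF Lsh[OF X] Lsh[OF Y]] lower_eq[OF X Y]
      using e by (simp cong: SUP_cong INF_cong)
  qed
  have sub: "upper_cov Ps (\<lambda>\<omega>. X \<omega> + Y \<omega>) Z \<le> upper_cov Ps X Z + upper_cov Ps Y Z"
    unfolding cov_eq[OF Lad[OF X Y] Z] cov_eq[OF X Z] cov_eq[OF Y Z]
  proof (rule cSUP_least[OF mixes_ne])
    fix l assume l: "l \<in> mixes Ps"
    show "cv l (\<lambda>\<omega>. X \<omega> + Y \<omega>) Z \<le> (SUP l\<in>mixes Ps. cv l X Z) + (SUP l\<in>mixes Ps. cv l Y Z)"
      unfolding cv_add[OF X Y Z l]
      by (intro add_mono cSUP_upper l cv_bdd_above X Y Z)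
  qed
  have supl: "lower_cov Ps (\<lambda>\<omega>. X \<omega> + Y \<omega>) Z \<ge> lower_cov Ps X Z + lower_cov Ps Y Z"
    unfolding lower_eq[OF Lad[OF X Y] Z] lower_eq[OF X Z] lower_eq[OF Y Z]
  proof (rule cINF_greatest[OF mixes_ne])
    fix l assume l: "l \<in> mixes Ps"
    show "(INF l\<in>mixes Ps. cv l X Z) + (INF l\<in>mixes Ps. cv l Y Z) \<le> cv l (\<lambda>\<omega>. X \<omega> + Y \<omega>) Z"
      unfolding cv_add[OF X Y Z l]
      by (intro add_mono cINF_lower l cv_bdd_below X Y Z)
  qed
  have e_sc: "cv l (\<lambda>\<omega>. a * X \<omega>) (\<lambda>\<omega>. b * Y \<omega>) = a * b * cv l X Y" if "l \<in> mixes Ps" for l a b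
    using cv_aff[OF X Y that, of a 0 b 0] by simp
  have pos: "upper_cov Ps (\<lambda>\<omega>. a * X \<omega>) (\<lambda>\<omega>. b * Y \<omega>) = a * b * upper_cov Ps X Y
        \<and> lower_cov Ps (\<lambda>\<omega>. a * X \<omega>) (\<lambda>\<omega>. b * Y \<omega>) = a * b * lower_cov Ps X Y"
    if ab: "a * b \<ge> 0" for a b
  proof -
    have "upper_cov Ps (\<lambda>\<omega>. a * X \<omega>) (\<lambda>\<omega>. b * Y \<omega>) = (SUP l\<in>mixes Ps. a * b * cv l X Y)"
      unfolding cov_eq[OF Lsc[OF X] Lsc[OF Y]] using e_sc by (simp cong: SUP_cong)
    also have "\<dots> = a * b * upper_cov Ps X Y"
      unfolding cov_eq[OF X Y] by (rule SUP_cmult[OF ab mixes_ne cv_bdd_above[OF X Y]])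
    finally have 1: "upper_cov Ps (\<lambda>\<omega>. a * X \<omega>) (\<lambda>\<omega>. b * Y \<omega>) = a * b * upper_cov Ps X Y" .
    have "lower_cov Ps (\<lambda>\<omega>. a * X \<omega>) (\<lambda>\<omega>. b * Y \<omega>) = (INF l\<in>mixes Ps. a * b * cv l X Y)"
      unfolding lower_eq[OF Lsc[OF X] Lsc[OF Y]] using e_sc by (simp cong: INF_cong)
    also have "\<dots> = a * b * lower_cov Ps X Y"
      unfolding lower_eq[OF X Y] by (rule INF_cmult[OF ab mixes_ne cv_bdd_below[OF X Y]])
    finally show ?thesis using 1 by simp
  qed
  have neg: "upper_cov Ps (\<lambda>\<omega>. a * X \<omega>) (\<lambda>\<omega>. b * Y \<omega>) = a * b * lower_cov Ps X Y"
    if ab: "a * b \<le> 0" for a b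
  proof -
    have ab': "0 \<le> - (a * b)" using ab by simp
    have "upper_cov Ps (\<lambda>\<omega>. a * X \<omega>) (\<lambda>\<omega>. b * Y \<omega>) = (SUP l\<in>mixes Ps. (- (a * b)) * (- cv l X Y))"
      unfolding cov_eq[OF Lsc[OF X] Lsc[OF Y]] using e_sc by (simp cong: SUP_cong)
    also have "\<dots> = (- (a * b)) * (SUP l\<in>mixes Ps. - cv l X Y)"
      by (rule SUP_cmult[OF ab' mixes_ne bdd_below_neg[OF cv_bdd_below[OF X Y]]])
    also have "\<dots> = a * b * lower_cov Ps X Y"
      unfolding lower_eq[OF X Y] INF_as_SUP[of "\<lambda>l. cv l X Y"] by simp
    finally show ?thesis .
  qed
  have p1: "lower_cov Ps X Y = - upper_cov Ps (\<lambda>\<omega>. - X \<omega>) Y" by (rule lower_syn)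
  have p2: "lower_cov Ps X Y = - upper_cov Ps X (\<lambda>\<omega>. - Y \<omega>)"
  proof -
    have "upper_cov Ps X (\<lambda>\<omega>. - Y \<omega>) = (SUP l\<in>mixes Ps. - cv l X Y)"
      unfolding cov_eq[OF X L2_neg[OF Y]] using cv_aff[OF X Y, of _ 1 0 "-1" 0] by (simp cong: SUP_cong)
    then show ?thesis unfolding lower_eq[OF X Y] INF_as_SUP[of "\<lambda>l. cv l X Y"] by simp
  qed
  show ?thesis using sym syml shift sub supl pos neg p1 p2 by blast
qed

end
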